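(* Let $\kappa$ be a regular uncountable cardinal, $\vec C$ a $C$-sequence over $\kappa$, and let $\rho_0,\rho_2$ be the functions obtained by walking along $\vec C$. Then $T(\rho_0)$ is a special $\kappa$-tree if and only if $T(\rho_2)$ is a special $\kappa$-tree.
   Context: A $C$-sequence over $\kappa$ is $\langle C_\delta\mid\delta<\kappa\rangle$, each $C_\delta$ a closed subset of $\delta$ with $\sup(C_\delta)=\sup(\delta)$. Walks: for $\beta<\gamma<\kappa$, $\mathrm{Tr}(\beta,\gamma)(0)=\gamma$, and $\mathrm{Tr}(\beta,\gamma)(n)=\min(C_{\mathrm{Tr}(\beta,\gamma)(n-1)}\setminus\beta)$ if $\mathrm{Tr}(\beta,\gamma)(n-1)>\beta$, else $\beta$; $\rho_2(\beta,\gamma)$ is the least $l$ with $\mathrm{Tr}(\beta,\gamma)(l)=\beta$; $\rho_0(\beta,\gamma)=\langle\mathrm{otp}(C_{\mathrm{Tr}(\beta,\gamma)(n)}\cap\beta)\mid n<\rho_2(\beta,\gamma)\rangle$. For $c\in\{\rho_0,\rho_2\}$, $T(c)=\{c_\delta\restriction\gamma\mid\gamma\le\delta<\kappa\}$ ordered by $\subseteq$, where $c_\delta(\xi)=c(\xi,\delta)$ for $\xi<\delta$. A $\kappa$-tree is a tree of height $\kappa$ with all levels of size $<\kappa$. A $\kappa$-tree $(T,<_T)$ is special iff there is $f:T\to T$ with $f(x)<_Tx$ for every non-minimal $x$ and each $f^{-1}\{z\}$ covered by fewer than $\kappa$ antichains. *)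

theory Defs
  imports Main "HOL-Library.Countable_Set"
begin

(* kappa is represented by a well-ordered type 'k whose order type is kappa *)
definition regular_uncountable_cardinal :: "'k::wellorder itself \<Rightarrow> bool" where
  "regular_uncountable_cardinal _ \<longleftrightarrow>
     uncountable (UNIV::'k set) \<and>
     (\<forall>\<delta>::'k. (card_of {..<\<delta>}, card_of (UNIV::'k set)) \<in> ordLess) \<and>
     (\<forall>A::'k set. (card_of A, card_of (UNIV::'k set)) \<in> ordLess \<longrightarrow> (\<exists>\<delta>. \<forall>a\<in>A. a < \<delta>))"

definition is_sup :: "'k::wellorder set \<Rightarrow> 'k \<Rightarrow> bool" where
  "is_sup A \<gamma> \<longleftrightarrow> (\<forall>a\<in>A. a \<le> \<gamma>) \<and> (\<forall>\<eta><\<gamma>. \<exists>a\<in>A. \<eta> < a)"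

definition closed_below :: "'k::wellorder set \<Rightarrow> 'k \<Rightarrow> bool" where
  "closed_below D \<delta> \<longleftrightarrow> D \<subseteq> {..<\<delta>} \<and>
     (\<forall>\<gamma><\<delta>. (\<exists>x. x < \<gamma>) \<and> is_sup (D \<inter> {..<\<gamma>}) \<gamma> \<longrightarrow> \<gamma> \<in> D)"

definition C_sequence :: "('k::wellorder \<Rightarrow> 'k set) \<Rightarrow> bool" where
  "C_sequence C \<longleftrightarrow> (\<forall>\<delta>. closed_below (C \<delta>) \<delta> \<and>
      (\<forall>\<gamma>. is_sup (C \<delta>) \<gamma> \<longleftrightarrow> is_sup {..<\<delta>} \<gamma>))"

primrec Tr :: "('k::wellorder \<Rightarrow> 'k set) \<Rightarrow> 'k \<Rightarrow> 'k \<Rightarrow> nat \<Rightarrow> 'k" where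
  "Tr C \<beta> \<gamma> 0 = \<gamma>"
| "Tr C \<beta> \<gamma> (Suc n) =
     (if \<beta> < Tr C \<beta> \<gamma> n then (LEAST x. x \<in> C (Tr C \<beta> \<gamma> n) \<and> \<beta> \<le> x) else \<beta>)"

definition rho2 :: "('k::wellorder \<Rightarrow> 'k set) \<Rightarrow> 'k \<Rightarrow> 'k \<Rightarrow> nat" where
  "rho2 C \<beta> \<gamma> = (LEAST l. Tr C \<beta> \<gamma> l = \<beta>)"

definition otp :: "'k::wellorder set \<Rightarrow> 'k" where
  "otp X = (THE \<gamma>. \<exists>f. bij_betw f {..<\<gamma>} X \<and> strict_mono_on {..<\<gamma>} f)"

definition rho0 :: "('k::wellorder \<Rightarrow> 'k set) \<Rightarrow> 'k \<Rightarrow> 'k \<Rightarrow> 'k list" where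
  "rho0 C \<beta> \<gamma> = map (\<lambda>n. otp (C (Tr C \<beta> \<gamma> n) \<inter> {..<\<beta>})) [0..<rho2 C \<beta> \<gamma>]"

definition fiber_restr :: "('k::wellorder \<Rightarrow> 'k \<Rightarrow> 'v) \<Rightarrow> 'k \<Rightarrow> 'k \<Rightarrow> ('k \<rightharpoonup> 'v)" where
  "fiber_restr c \<delta> \<gamma> = (\<lambda>\<xi>. if \<xi> < \<gamma> then Some (c \<xi> \<delta>) else None)"

definition Tc :: "('k::wellorder \<Rightarrow> 'k \<Rightarrow> 'v) \<Rightarrow> ('k \<rightharpoonup> 'v) set" where
  "Tc c = {fiber_restr c \<delta> \<gamma> | \<gamma> \<delta>. \<gamma> \<le> \<delta>}"

definition Tc_less :: "('k \<rightharpoonup> 'v) \<Rightarrow> ('k \<rightharpoonup> 'v) \<Rightarrow> bool" where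
  "Tc_less s t \<longleftrightarrow> s \<subseteq>\<^sub>m t \<and> s \<noteq> t"

definition height_is :: "'a set \<Rightarrow> ('a \<Rightarrow> 'a \<Rightarrow> bool) \<Rightarrow> 'a \<Rightarrow> 'k::wellorder \<Rightarrow> bool" where
  "height_is T lt x \<alpha> \<longleftrightarrow> (\<exists>f. bij_betw f {..<\<alpha>} {y\<in>T. lt y x} \<and>
      (\<forall>a<\<alpha>. \<forall>b<\<alpha>. a < b \<longleftrightarrow> lt (f a) (f b)))"

definition kappa_tree :: "'k::wellorder itself \<Rightarrow> 'a set \<Rightarrow> ('a \<Rightarrow> 'a \<Rightarrow> bool) \<Rightarrow> bool" where
  "kappa_tree _ T lt \<longleftrightarrow>
     (\<forall>x\<in>T. \<not> lt x x) \<and>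
     (\<forall>x\<in>T. \<forall>y\<in>T. \<forall>z\<in>T. lt x y \<longrightarrow> lt y z \<longrightarrow> lt x z) \<and>
     (\<forall>x\<in>T. \<exists>\<alpha>::'k. height_is T lt x \<alpha>) \<and>
     (\<forall>\<alpha>::'k. {x\<in>T. height_is T lt x \<alpha>} \<noteq> {} \<and>
        (card_of {x\<in>T. height_is T lt x \<alpha>}, card_of (UNIV::'k set)) \<in> ordLess)"

definition antichain_in :: "'a set \<Rightarrow> ('a \<Rightarrow> 'a \<Rightarrow> bool) \<Rightarrow> 'a set \<Rightarrow> bool" where
  "antichain_in T lt A \<longleftrightarrow> A \<subseteq> T \<and> (\<forall>x\<in>A. \<forall>y\<in>A. \<not> lt x y)"

definition special_kappa_tree :: "'k::wellorder itself \<Rightarrow> 'a set \<Rightarrow> ('a \<Rightarrow> 'a \<Rightarrow> bool) \<Rightarrow> bool" where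
  "special_kappa_tree K T lt \<longleftrightarrow> kappa_tree K T lt \<and>
     (\<exists>f. (\<forall>x\<in>T. f x \<in> T) \<and>
          (\<forall>x\<in>T. (\<exists>y\<in>T. lt y x) \<longrightarrow> lt (f x) x) \<and>
          (\<forall>z\<in>T. \<exists>\<A>. (card_of \<A>, card_of (UNIV::'k set)) \<in> ordLess \<and>
                 (\<forall>A\<in>\<A>. antichain_in T lt A) \<and> {x\<in>T. f x = z} \<subseteq> \<Union>\<A>))"

end

theory Submission
  imports Defs
begin

unbundle cardinal_syntax



definition sm :: "'k::wellorder itself \<Rightarrow> 'a set \<Rightarrow> bool" where
  "sm K A \<longleftrightarrow> |A| <o |UNIV::'k set|"

lemma reg_unc: "regular_uncountable_cardinal TYPE('k::wellorder) \<Longrightarrow> uncountable (UNIV::'k set)"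
  unfolding regular_uncountable_cardinal_def by blast

lemma reg_inf: "regular_uncountable_cardinal TYPE('k::wellorder) \<Longrightarrow> infinite (UNIV::'k set)"
  using reg_unc countable_finite by blast

lemma reg_bdd: "regular_uncountable_cardinal TYPE('k::wellorder) \<Longrightarrow> sm TYPE('k) (A::'k set) \<Longrightarrow> \<exists>d. \<forall>a\<in>A. a < d"
  unfolding regular_uncountable_cardinal_def sm_def by blast

lemma reg_seg: "regular_uncountable_cardinal TYPE('k::wellorder) \<Longrightarrow> sm TYPE('k) {..<(d::'k)}"
  unfolding regular_uncountable_cardinal_def sm_def by blast

lemma sm_mono: "sm K B \<Longrightarrow> A \<subseteq> B \<Longrightarrow> sm K A"
  unfolding sm_def using card_of_mono1 ordLeq_ordLess_trans by blast

lemma sm_image: "sm K A \<Longrightarrow> sm K (f ` A)"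
  unfolding sm_def using card_of_image ordLeq_ordLess_trans by blast

lemma sm_inj: assumes "sm K B" "inj_on f A" "f ` A \<subseteq> B" shows "sm K A"
proof -
  have "|A| \<le>o |B|" using assms(2,3) card_of_ordLeq by blast
  thus ?thesis using assms(1) unfolding sm_def using ordLeq_ordLess_trans by blast
qed

lemma sm_finite: assumes "regular_uncountable_cardinal TYPE('k::wellorder)" "finite A"
  shows "sm TYPE('k) A"
proof -
  have "\<not>(\<exists>f. inj_on f (UNIV::'k set) \<and> f ` UNIV \<le> A)"
    using reg_inf[OF assms(1)] assms(2) finite_imageD finite_subset by blast
  thus ?thesis unfolding sm_def using card_of_ordLess by blast
qed

lemma sm_nat: assumes "regular_uncountable_cardinal TYPE('k::wellorder)"
  shows "sm TYPE('k) (UNIV::nat set)"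
proof -
  have "\<not>(\<exists>f. inj_on f (UNIV::'k set) \<and> f ` UNIV \<le> (UNIV::nat set))"
    using reg_unc[OF assms] unfolding countable_def by blast
  thus ?thesis unfolding sm_def using card_of_ordLess by blast
qed

lemma stable_k: assumes "regular_uncountable_cardinal TYPE('k::wellorder)"
  shows "stable |UNIV::'k set|"
  unfolding stable_def
proof (intro allI impI)
  fix A :: "'k set" and F :: "'k \<Rightarrow> 'k set"
  assume h: "|A| <o |UNIV::'k set| \<and> (\<forall>a\<in>A. |F a| <o |UNIV::'k set| )"
  obtain al where al: "\<forall>a\<in>A. a < al" using h reg_bdd[OF assms, of A] unfolding sm_def by blast
  have "\<forall>a\<in>A. \<exists>b. \<forall>x\<in>F a. x < b" using h reg_bdd[OF assms] unfolding sm_def by blast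
  then obtain b where b: "\<forall>a\<in>A. \<forall>x\<in>F a. x < b a" by metis
  have "sm TYPE('k) (b ` A)" using h sm_image unfolding sm_def by blast
  then obtain be where be: "\<forall>a\<in>A. b a < be" using reg_bdd[OF assms, of "b ` A"] by blast
  define mu where "mu = max al be"
  have sub: "Sigma A F \<subseteq> {..<mu} \<times> {..<mu}" using al b be unfolding mu_def
    by (auto simp: less_max_iff_disj) (meson less_trans)
  have "sm TYPE('k) ({..<mu} \<times> {..<mu})"
  proof (cases "finite {..<mu}")
    case True thus ?thesis by (intro sm_finite[OF assms] finite_cartesian_product True)
  next
    case False
    hence "|{..<mu} \<times> {..<mu}| =o |{..<mu}|" by (rule card_of_Times_same_infinite)
    thus ?thesis using reg_seg[OF assms, of mu] unfolding sm_def using ordIso_ordLess_trans by blast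
  qed
  thus "|Sigma A F| <o |UNIV::'k set|" using sub sm_mono unfolding sm_def by blast
qed

lemma sm_UN: assumes "regular_uncountable_cardinal TYPE('k::wellorder)"
  "sm TYPE('k) I" "\<And>i. i \<in> I \<Longrightarrow> sm TYPE('k) (A i)"
  shows "sm TYPE('k) (\<Union>i\<in>I. A i)"
  using card_of_UNION_ordLess_infinite_Field[OF stable_k[OF assms(1)] card_of_Card_order] assms(2,3)
  unfolding sm_def by blast

lemma sm_Sigma: assumes "regular_uncountable_cardinal TYPE('k::wellorder)"
  "sm TYPE('k) I" "\<And>i. i \<in> I \<Longrightarrow> sm TYPE('k) (A i)"
  shows "sm TYPE('k) (Sigma I A)"
  using stable_elim[OF stable_k[OF assms(1)]] assms(2,3) unfolding sm_def by blast

lemma sm_Times: assumes "regular_uncountable_cardinal TYPE('k::wellorder)"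
  "sm TYPE('k) A" "sm TYPE('k) B"
  shows "sm TYPE('k) (A \<times> B)"
  using sm_Sigma[OF assms(1,2), of "\<lambda>_. B"] assms(3) by blast

lemma sm_Un: assumes "regular_uncountable_cardinal TYPE('k::wellorder)"
  "sm TYPE('k) A" "sm TYPE('k) B"
  shows "sm TYPE('k) (A \<union> B)"
proof -
  have "A \<union> B = (\<Union>i\<in>{True,False}. if i then A else B)" by auto
  thus ?thesis using sm_UN[OF assms(1) sm_finite[OF assms(1)], of "{True,False}" "\<lambda>i. if i then A else B"] assms
    by auto
qed

lemma sm_insert: assumes "regular_uncountable_cardinal TYPE('k::wellorder)" "sm TYPE('k) A"
  shows "sm TYPE('k) (insert x A)"
  using sm_Un[OF assms(1) sm_finite[OF assms(1), of "{x}"] assms(2)] by simp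

lemma sm_atMost: assumes "regular_uncountable_cardinal TYPE('k::wellorder)"
  shows "sm TYPE('k) {..(d::'k)}"
proof -
  have "{..d} = insert d {..<d}" by auto
  thus ?thesis using sm_insert[OF assms reg_seg[OF assms]] by simp
qed

lemma sm_lists: assumes "regular_uncountable_cardinal TYPE('k::wellorder)" "sm TYPE('k) A"
  shows "sm TYPE('k) (lists A)"
proof -
  have L: "sm TYPE('k) {xs\<in>lists A. length xs = n}" for n
  proof (induction n)
    case 0
    have "{xs\<in>lists A. length xs = 0} = {[]}" by auto
    thus ?case using sm_finite[OF assms(1), of "{[]}"] by simp
  next
    case (Suc n)
    have "{xs\<in>lists A. length xs = Suc n} \<subseteq> (\<lambda>(a,xs). a # xs) ` (A \<times> {xs\<in>lists A. length xs = n})"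
    proof
      fix xs assume "xs \<in> {xs\<in>lists A. length xs = Suc n}"
      then obtain a ys where "xs = a # ys" "a \<in> A" "ys \<in> lists A" "length ys = n"
        by (cases xs) auto
      thus "xs \<in> (\<lambda>(a,xs). a # xs) ` (A \<times> {xs\<in>lists A. length xs = n})" by force
    qed
    thus ?case by (rule sm_mono[OF sm_image[OF sm_Times[OF assms Suc.IH]]])
  qed
  have "lists A = (\<Union>n\<in>UNIV. {xs\<in>lists A. length xs = n})" by auto
  moreover have "sm TYPE('k) (\<Union>n\<in>UNIV. {xs\<in>lists A. length xs = n})"
    by (rule sm_UN[OF assms(1) sm_nat[OF assms(1)] L])
  ultimately show ?thesis by simp
qed



definition kz :: "'k::wellorder" where "kz = (LEAST x. True)"

lemma kz_le[simp]: "kz \<le> x"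
  unfolding kz_def by (simp add: Least_le)

lemma not_less_kz[simp]: "\<not> x < kz"
  using kz_le not_le by blast

lemma smono_ge:
  fixes f :: "'k::wellorder \<Rightarrow> 'k"
  assumes "strict_mono_on D f" "\<And>y z. z \<in> D \<Longrightarrow> y \<le> z \<Longrightarrow> y \<in> D" "x \<in> D"
  shows "x \<le> f x"
  using assms(3)
proof (induction x rule: less_induct)
  case (less x)
  show ?case
  proof (rule ccontr)
    assume "\<not> x \<le> f x"
    hence lt: "f x < x" by simp
    have fxD: "f x \<in> D" using assms(2) less.prems lt by auto
    have "f (f x) < f x" using strict_mono_onD[OF assms(1) fxD less.prems lt] .
    moreover have "f x \<le> f (f x)" using less.IH[OF lt fxD] .
    ultimately show False by simp
  qed
qed

lemma smono_inv:
  fixes f :: "'a::linorder \<Rightarrow> 'b::linorder"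
  assumes "bij_betw f A B" "strict_mono_on A f"
  shows "strict_mono_on B (inv_into A f)"
proof (rule strict_mono_onI)
  fix y1 y2 assume y: "y1 \<in> B" "y2 \<in> B" "y1 < y2"
  let ?g = "inv_into A f"
  have g: "?g y1 \<in> A" "?g y2 \<in> A" "f (?g y1) = y1" "f (?g y2) = y2"
    using y assms(1) by (auto simp: bij_betw_def inv_into_into f_inv_into_f)
  show "?g y1 < ?g y2"
  proof (rule ccontr)
    assume "\<not> ?g y1 < ?g y2"
    hence "?g y2 < ?g y1 \<or> ?g y2 = ?g y1" by auto
    thus False
    proof
      assume "?g y2 < ?g y1"
      hence "f (?g y2) < f (?g y1)" using strict_mono_onD[OF assms(2)] g by blast
      thus False using g y by simp
    next
      assume "?g y2 = ?g y1"
      thus False using g y by (metis less_irrefl)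
    qed
  qed
qed

lemma smono_comp:
  assumes "strict_mono_on A f" "f ` A \<subseteq> B" "strict_mono_on B g"
  shows "strict_mono_on A (g \<circ> f)"
proof (rule strict_mono_onI)
  fix r s assume rs: "r \<in> A" "s \<in> A" "r < s"
  have "f r < f s" using strict_mono_onD[OF assms(1) rs] .
  moreover have "f r \<in> B" "f s \<in> B" using rs assms(2) by auto
  ultimately show "(g \<circ> f) r < (g \<circ> f) s" using strict_mono_onD[OF assms(3)] by simp
qed

lemma iso_seg_eq:
  fixes f :: "'k::wellorder \<Rightarrow> 'k"
  assumes "bij_betw f {..<a} {..<b}" "strict_mono_on {..<a} f"
  shows "a = b"
proof (rule ccontr)
  assume "a \<noteq> b"
  hence "a < b \<or> b < a" by auto
  thus False
  proof
    assume ab: "a < b"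
    let ?g = "inv_into {..<a} f"
    have sg: "strict_mono_on {..<b} ?g" using smono_inv[OF assms] .
    have "a \<le> ?g a" by (rule smono_ge[OF sg]) (use ab in auto)
    moreover have "?g a \<in> {..<a}" using ab assms(1)
      by (metis bij_betw_def inv_into_into lessThan_iff)
    ultimately show False by simp
  next
    assume ba: "b < a"
    have "b \<le> f b" by (rule smono_ge[OF assms(2)]) (use ba in auto)
    moreover have "f b \<in> {..<b}" using ba assms(1) by (auto simp: bij_betw_def)
    ultimately show False by simp
  qed
qed

lemma iso_unique:
  fixes f :: "'k::wellorder \<Rightarrow> 'k"
  assumes "bij_betw f {..<a} X" "strict_mono_on {..<a} f"
          "bij_betw g {..<b} X" "strict_mono_on {..<b} g"
  shows "a = b"
proof -
  let ?h = "inv_into {..<b} g \<circ> f"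
  have "bij_betw ?h {..<a} {..<b}"
    using assms(1) bij_betw_inv_into[OF assms(3)] bij_betw_trans by blast
  moreover have "strict_mono_on {..<a} ?h"
    using smono_comp[OF assms(2) _ smono_inv[OF assms(3,4)]] assms(1) by (auto simp: bij_betw_def)
  ultimately show ?thesis using iso_seg_eq by blast
qed

lemma otp_cong:
  fixes h :: "'k::wellorder \<Rightarrow> 'k"
  assumes "bij_betw h A B" "strict_mono_on A h"
  shows "otp A = otp B"
proof -
  have "(\<exists>f. bij_betw f {..<g} A \<and> strict_mono_on {..<g} f) \<longleftrightarrow>
        (\<exists>f. bij_betw f {..<g} B \<and> strict_mono_on {..<g} f)" for g
  proof
    assume "\<exists>f. bij_betw f {..<g} A \<and> strict_mono_on {..<g} f"
    then obtain f where f: "bij_betw f {..<g} A" "strict_mono_on {..<g} f" by blast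
    have "bij_betw (h \<circ> f) {..<g} B" using f(1) assms(1) bij_betw_trans by blast
    moreover have "strict_mono_on {..<g} (h \<circ> f)"
      using smono_comp[OF f(2) _ assms(2)] f(1) by (auto simp: bij_betw_def)
    ultimately show "\<exists>f. bij_betw f {..<g} B \<and> strict_mono_on {..<g} f" by blast
  next
    assume "\<exists>f. bij_betw f {..<g} B \<and> strict_mono_on {..<g} f"
    then obtain f where f: "bij_betw f {..<g} B" "strict_mono_on {..<g} f" by blast
    have "bij_betw (inv_into A h \<circ> f) {..<g} A" using f(1) bij_betw_inv_into[OF assms(1)] bij_betw_trans by blast
    moreover have "strict_mono_on {..<g} (inv_into A h \<circ> f)"
      using smono_comp[OF f(2) _ smono_inv[OF assms]] f(1) by (auto simp: bij_betw_def)
    ultimately show "\<exists>f. bij_betw f {..<g} A \<and> strict_mono_on {..<g} f" by blast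
  qed
  hence "(\<lambda>g. \<exists>f. bij_betw f {..<g} A \<and> strict_mono_on {..<g} f) =
        (\<lambda>g. \<exists>f. bij_betw f {..<g} B \<and> strict_mono_on {..<g} f)" by (rule ext)
  thus ?thesis unfolding otp_def by (rule arg_cong)
qed

definition enum :: "'k::wellorder set \<Rightarrow> 'k \<Rightarrow> 'k" where
  "enum X = wfrec {(x,y). x < y} (\<lambda>e a. LEAST x. x \<in> X \<and> (\<forall>a'<a. e a' < x))"

lemma enum_eq: "enum X a = (LEAST x. x \<in> X \<and> (\<forall>a'<a. enum X a' < x))"
  unfolding enum_def by (subst wfrec[OF wellorder_class.wf]) (simp add: cut_def)

lemma otp_ex:
  fixes X :: "'k::wellorder set"
  assumes "X \<subseteq> {..<b}"
  shows "bij_betw (enum X) {..<otp X} X \<and> strict_mono_on {..<otp X} (enum X) \<and> otp X \<le> b"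
proof -
  define G where "G a \<longleftrightarrow> (\<exists>x\<in>X. \<forall>a'<a. enum X a' < x)" for a
  have Gp: "enum X a \<in> X \<and> (\<forall>a'<a. enum X a' < enum X a)" if "G a" for a
  proof -
    have ex: "\<exists>x. x \<in> X \<and> (\<forall>a'<a. enum X a' < x)" using that unfolding G_def by blast
    have e: "enum X a = (LEAST x. x \<in> X \<and> (\<forall>a'<a. enum X a' < x))" by (rule enum_eq)
    show ?thesis unfolding e by (rule LeastI_ex[OF ex])
  qed
  have Gd: "G a1" if "G a" "a1 \<le> a" for a a1
    using that unfolding G_def by (meson order_less_le_trans)
  have "\<exists>a. \<not> G a"
  proof (rule ccontr)
    assume "\<not> (\<exists>a. \<not> G a)"
    hence all: "G a" for a by blast
    have sm: "strict_mono_on UNIV (enum X)"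
      by (rule strict_mono_onI) (use Gp all in blast)
    have "b \<le> enum X b" by (rule smono_ge[OF sm]) auto
    moreover have "enum X b \<in> X" using Gp all by blast
    ultimately show False using assms by auto
  qed
  define a0 where "a0 = (LEAST a. \<not> G a)"
  have na0: "\<not> G a0" unfolding a0_def using LeastI_ex[OF \<open>\<exists>a. \<not> G a\<close>] .
  have Gl: "G a" if "a < a0" for a using that not_less_Least unfolding a0_def by blast
  have sm: "strict_mono_on {..<a0} (enum X)"
    by (rule strict_mono_onI) (use Gp Gl in auto)
  have inX: "enum X ` {..<a0} \<subseteq> X" using Gp Gl by auto
  have sur: "X \<subseteq> enum X ` {..<a0}"
  proof
    fix x assume xX: "x \<in> X"
    show "x \<in> enum X ` {..<a0}"
    proof (rule ccontr)
      assume nx: "x \<notin> enum X ` {..<a0}"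
      have "a < a0 \<longrightarrow> enum X a < x" for a
      proof (induction a rule: less_induct)
        case (less a)
        show ?case
        proof
          assume aa0: "a < a0"
          have "enum X a \<le> x"
            apply (subst enum_eq)
            apply (rule Least_le)
            using xX less.IH aa0 by auto
          moreover have "enum X a \<noteq> x" using nx aa0 by auto
          ultimately show "enum X a < x" by simp
        qed
      qed
      hence "G a0" unfolding G_def using xX by blast
      thus False using na0 by blast
    qed
  qed
  have bij: "bij_betw (enum X) {..<a0} X"
    using sm inX sur unfolding bij_betw_def
    by (metis strict_mono_on_imp_inj_on subset_antisym)
  have "otp X = a0"
    unfolding otp_def
  proof (rule the_equality)
    show "\<exists>f. bij_betw f {..<a0} X \<and> strict_mono_on {..<a0} f" using bij sm by blast
  next
    fix g :: 'k assume "\<exists>f. bij_betw f {..<g} X \<and> strict_mono_on {..<g} f"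
    then obtain f where "bij_betw f {..<g} X" "strict_mono_on {..<g} f" by blast
    thus "g = a0" using iso_unique bij sm by blast
  qed
  moreover have "a0 \<le> b"
  proof (rule ccontr)
    assume "\<not> a0 \<le> b"
    hence "b < a0" by simp
    hence "b \<le> enum X b" by (intro smono_ge[OF sm]) auto
    moreover have "enum X b \<in> X" using inX \<open>b < a0\<close> by auto
    ultimately show False using assms by auto
  qed
  ultimately show ?thesis using bij sm by simp
qed

lemma otp_union:
  fixes X X' Y :: "'k::wellorder set"
  assumes "X \<subseteq> {..<z}" "X' \<subseteq> {..<z}" "\<forall>y\<in>Y. z \<le> y" "otp X = otp X'"
  shows "otp (X \<union> Y) = otp (X' \<union> Y)"
proof -
  let ?a = "otp X"
  have e1: "bij_betw (enum X) {..<?a} X" "strict_mono_on {..<?a} (enum X)"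
    using otp_ex[OF assms(1)] by auto
  have e2: "bij_betw (enum X') {..<?a} X'" "strict_mono_on {..<?a} (enum X')"
    using otp_ex[OF assms(2)] assms(4) by auto
  let ?k = "enum X' \<circ> inv_into {..<?a} (enum X)"
  have kb: "bij_betw ?k X X'" using bij_betw_inv_into[OF e1(1)] e2(1) bij_betw_trans by blast
  have km: "strict_mono_on X ?k"
    using smono_comp[OF smono_inv[OF e1] _ e2(2)] bij_betw_inv_into[OF e1(1)] by (auto simp: bij_betw_def)
  define h where "h x = (if x \<in> Y then x else ?k x)" for x
  have XY: "X \<inter> Y = {}" "X' \<inter> Y = {}" using assms(1,2,3) by fastforce+
  have hb1: "bij_betw h X X'" using kb XY(1) by (subst bij_betw_cong[of _ _ ?k]) (auto simp: h_def)
  have hb2: "bij_betw h Y Y" by (subst bij_betw_cong[of _ _ id]) (auto simp: h_def)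
  have hb: "bij_betw h (X \<union> Y) (X' \<union> Y)" by (rule bij_betw_combine[OF hb1 hb2 XY(2)])
  have hm: "strict_mono_on (X \<union> Y) h"
  proof (rule strict_mono_onI)
    fix x y assume xy: "x \<in> X \<union> Y" "y \<in> X \<union> Y" "x < y"
    show "h x < h y"
    proof (cases "x \<in> Y")
      case True
      hence "y \<notin> X" using xy assms(1,3) by fastforce
      hence "y \<in> Y" using xy by blast
      thus ?thesis using True xy by (simp add: h_def)
    next
      case False
      hence xX: "x \<in> X" using xy by blast
      have hx: "h x \<in> X'" "h x = ?k x" using False hb1 xX by (auto simp: h_def bij_betw_def)
      show ?thesis
      proof (cases "y \<in> Y")
        case True
        thus ?thesis using hx assms(2,3) by (auto simp: h_def) (meson lessThan_iff order_less_le_trans subsetD)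
      next
        case False
        hence "y \<in> X" using xy by blast
        thus ?thesis using strict_mono_onD[OF km xX _ xy(3)] hx False by (simp add: h_def)
      qed
    qed
  qed
  show ?thesis using otp_cong[OF hb hm] .
qed



lemma cseq_sub: "C_sequence C \<Longrightarrow> C t \<subseteq> {..<t}"
  unfolding C_sequence_def closed_below_def by blast

lemma cseq_ex:
  fixes C :: "'k::wellorder \<Rightarrow> 'k set"
  assumes cs: "C_sequence C" and bt: "b < t" and kb: "kz < b"
  shows "\<exists>x\<in>C t. b \<le> x"
proof -
  have sup: "is_sup (C t) s \<longleftrightarrow> is_sup {..<t} s" for s using cs unfolding C_sequence_def by blast
  have clo: "closed_below (C t) t" using cs unfolding C_sequence_def by blast
  show ?thesis
  proof (cases "\<forall>e<t. \<exists>a<t. e < a")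
    case True
    hence "is_sup {..<t} t" unfolding is_sup_def by auto
    hence "is_sup (C t) t" using sup by blast
    then obtain a where "a \<in> C t" "b < a" using bt unfolding is_sup_def by blast
    thus ?thesis by (auto intro: less_imp_le)
  next
    case False
    then obtain e where et: "e < t" and emax: "\<forall>a<t. \<not> e < a" by blast
    have "is_sup {..<t} e" unfolding is_sup_def using emax et by (auto simp: not_less)
    hence se: "is_sup (C t) e" using sup by blast
    have be: "b \<le> e" using emax bt by (auto simp: not_less)
    show ?thesis
    proof (cases "b < e")
      case True
      then obtain a where "a \<in> C t" "b < a" using se unfolding is_sup_def by blast
      thus ?thesis by (auto intro: less_imp_le)
    next
      case False
      hence beq: "b = e" using be by simp
      show ?thesis
      proof (cases "e \<in> C t")
        case True thus ?thesis using beq by blast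
      next
        case eC: False
        have allless: "\<forall>a\<in>C t. a < e" using se eC unfolding is_sup_def
          by (metis order_le_less)
        show ?thesis
        proof (cases "\<exists>r<e. \<forall>x. r < x \<longrightarrow> e \<le> x")
          case True
          then obtain r where "r < e" "\<forall>x. r < x \<longrightarrow> e \<le> x" by blast
          then obtain a where "a \<in> C t" "r < a" "e \<le> a" using se unfolding is_sup_def by blast
          thus ?thesis using allless by (meson not_le)
        next
          case lim: False
          have "is_sup (C t \<inter> {..<e}) e"
            unfolding is_sup_def
          proof (intro conjI allI impI ballI)
            fix a assume "a \<in> C t \<inter> {..<e}" thus "a \<le> e" by auto
          next
            fix r assume "r < e"
            then obtain x where "r < x" "x < e" using lim by (auto simp: not_le)
            then obtain a where "a \<in> C t" "x < a" using se unfolding is_sup_def by blast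
            thus "\<exists>a\<in>C t \<inter> {..<e}. r < a" using allless \<open>r < x\<close> by (meson IntI lessThan_iff order.strict_trans)
          qed
          moreover have "\<exists>x. x < e" using kb beq by blast
          ultimately have "e \<in> C t" using clo et unfolding closed_below_def by blast
          thus ?thesis using eC by blast
        qed
      qed
    qed
  qed
qed

lemma Tr_Suc_less: "b < Tr C b g n \<Longrightarrow> Tr C b g (Suc n) = (LEAST x. x \<in> C (Tr C b g n) \<and> b \<le> x)"
  by simp

lemma Tr_ge:
  fixes C :: "'k::wellorder \<Rightarrow> 'k set"
  assumes cs: "C_sequence C" and bg: "b \<le> g"
  shows "b \<le> Tr C b g n"
proof (induction n)
  case 0 thus ?case using bg by simp
next
  case (Suc n)
  show ?case
  proof (cases "b < Tr C b g n")
    case True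
    show ?thesis
    proof (cases "kz < b")
      case kb: True
      obtain x where x1: "x \<in> C (Tr C b g n)" and x2: "b \<le> x" using cseq_ex[OF cs True kb] by blast
      hence "(\<lambda>x. x \<in> C (Tr C b g n) \<and> b \<le> x) (LEAST x. x \<in> C (Tr C b g n) \<and> b \<le> x)"
        using LeastI[of "\<lambda>x. x \<in> C (Tr C b g n) \<and> b \<le> x" x] x1 x2 by blast
      thus ?thesis using True by simp
    next
      case False
      hence "b = kz" using kz_le[of b] by (simp add: order_le_less)
      thus ?thesis by simp
    qed
  next
    case False thus ?thesis by simp
  qed
qed

lemma Tr_step:
  fixes C :: "'k::wellorder \<Rightarrow> 'k set"
  assumes cs: "C_sequence C" and kb: "kz < b" and lt: "b < Tr C b g n"
  shows "Tr C b g (Suc n) \<in> C (Tr C b g n) \<and> b \<le> Tr C b g (Suc n) \<and> Tr C b g (Suc n) < Tr C b g n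
         \<and> (\<forall>x\<in>C (Tr C b g n). b \<le> x \<longrightarrow> Tr C b g (Suc n) \<le> x)"
proof -
  obtain x where x1: "x \<in> C (Tr C b g n)" and x2: "b \<le> x" using cseq_ex[OF cs lt kb] by blast
  hence L: "(\<lambda>x. x \<in> C (Tr C b g n) \<and> b \<le> x) (LEAST x. x \<in> C (Tr C b g n) \<and> b \<le> x)"
    using LeastI[of "\<lambda>x. x \<in> C (Tr C b g n) \<and> b \<le> x" x] x1 x2 by blast
  have e: "Tr C b g (Suc n) = (LEAST x. x \<in> C (Tr C b g n) \<and> b \<le> x)" using lt by simp
  show ?thesis unfolding e using L cseq_sub[OF cs] by (auto intro: Least_le)
qed

lemma Tr_stay: "Tr C b g n = b \<Longrightarrow> Tr C b g (n + m) = b"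
  by (induction m) auto

lemma Tr_shift: "Tr C b g1 n1 = Tr C b g2 n2 \<Longrightarrow> Tr C b g1 (n1 + p) = Tr C b g2 (n2 + p)"
  by (induction p) auto

lemma Tr_term:
  fixes C :: "'k::wellorder \<Rightarrow> 'k set"
  assumes cs: "C_sequence C" and kb: "kz < b" and bg: "b \<le> g"
  shows "\<exists>n. Tr C b g n = b"
proof (rule ccontr)
  assume nt: "\<not> (\<exists>n. Tr C b g n = b)"
  define m where "m = (LEAST t. t \<in> range (Tr C b g))"
  have "m \<in> range (Tr C b g)" unfolding m_def by (rule LeastI) blast
  then obtain n where mn: "m = Tr C b g n" by blast
  have "b < Tr C b g n" using Tr_ge[OF cs bg, of n] nt by (metis order_le_less)
  hence "Tr C b g (Suc n) < m" using Tr_step[OF cs kb] mn by blast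
  moreover have "m \<le> Tr C b g (Suc n)" unfolding m_def by (rule Least_le) blast
  ultimately show False by simp
qed

lemma rho2_props:
  fixes C :: "'k::wellorder \<Rightarrow> 'k set"
  assumes cs: "C_sequence C" and kb: "kz < b" and bg: "b \<le> g"
  shows "Tr C b g (rho2 C b g) = b" "\<And>m. m < rho2 C b g \<Longrightarrow> b < Tr C b g m"
    "\<And>n. Tr C b g n = b \<Longrightarrow> rho2 C b g \<le> n"
proof -
  obtain n where n: "Tr C b g n = b" using Tr_term[OF assms] by blast
  show "Tr C b g (rho2 C b g) = b" unfolding rho2_def by (rule LeastI[of _ n]) (rule n)
  show "rho2 C b g \<le> n" if "Tr C b g n = b" for n unfolding rho2_def by (rule Least_le) (rule that)
  fix m assume "m < rho2 C b g"
  hence "Tr C b g m \<noteq> b" unfolding rho2_def using not_less_Least by blast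
  thus "b < Tr C b g m" using Tr_ge[OF cs bg, of m] by simp
qed



primrec EE :: "('k::wellorder \<Rightarrow> 'k set) \<Rightarrow> 'k \<Rightarrow> 'k \<Rightarrow> nat \<Rightarrow> 'k set" where
  "EE C g d 0 = {x. kz < x \<and> x < g}"
| "EE C g d (Suc j) = {x \<in> EE C g d j. \<forall>y\<in>C (Tr C g d j). y < x \<or> g \<le> y}"

lemma EE_bd: "x \<in> EE C g d j \<Longrightarrow> kz < x \<and> x < g"
  by (induction j) auto

lemma EE_anti: "i \<le> j \<Longrightarrow> EE C g d j \<subseteq> EE C g d i"
proof (induction j)
  case 0 thus ?case by simp
next
  case (Suc j) thus ?case by (cases "i = Suc j") auto
qed

lemma EE_up: "x \<in> EE C g d j \<Longrightarrow> x \<le> x' \<Longrightarrow> x' < g \<Longrightarrow> x' \<in> EE C g d j"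
proof (induction j)
  case 0 thus ?case by auto
next
  case (Suc j)
  thus ?case by (auto dest: order_less_le_trans)
qed

context
  fixes C :: "'k::wellorder \<Rightarrow> 'k set" and g d :: 'k
  assumes cs: "C_sequence C" and gd: "g \<le> d"
begin

lemma EE_Tr: "x \<in> EE C g d j \<Longrightarrow> m \<le> j \<Longrightarrow> Tr C x d m = Tr C g d m"
proof (induction j arbitrary: m)
  case 0 thus ?case by simp
next
  case (Suc j)
  have xj: "x \<in> EE C g d j" using Suc.prems(1) by simp
  show ?case
  proof (cases "m \<le> j")
    case True thus ?thesis using Suc.IH xj by blast
  next
    case False
    hence m: "m = Suc j" using Suc.prems(2) by simp
    have e: "Tr C x d j = Tr C g d j" using Suc.IH xj by blast
    have xb: "kz < x" "x < g" using EE_bd[OF xj] by auto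
    have gle: "g \<le> Tr C g d j" using Tr_ge[OF cs gd] .
    have ne: "Tr C g d j \<noteq> g"
    proof
      assume eq: "Tr C g d j = g"
      obtain y where "y \<in> C g" "x \<le> y" using cseq_ex[OF cs xb(2) xb(1)] by blast
      moreover have "y < g" using calculation cseq_sub[OF cs] by blast
      ultimately show False using Suc.prems(1) eq by (auto simp: not_less)
    qed
    hence gl: "g < Tr C g d j" using gle by simp
    have xl: "x < Tr C x d j" using e gl xb by simp
    have P: "(\<lambda>y. y \<in> C (Tr C g d j) \<and> x \<le> y) = (\<lambda>y. y \<in> C (Tr C g d j) \<and> g \<le> y)"
      using Suc.prems(1) xb by (auto intro!: ext simp: not_less dest: order_less_le_trans)
    have "Tr C x d (Suc j) = (LEAST y. y \<in> C (Tr C g d j) \<and> x \<le> y)" using xl e by simp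
    also have "\<dots> = (LEAST y. y \<in> C (Tr C g d j) \<and> g \<le> y)" using P by simp
    also have "\<dots> = Tr C g d (Suc j)" using gl by simp
    finally show ?thesis using m by simp
  qed
qed

lemma EE_Tr_gt: "x \<in> EE C g d j \<Longrightarrow> m \<le> j \<Longrightarrow> x < Tr C x d m"
  using EE_Tr[of x j m] Tr_ge[OF cs gd, of m] EE_bd[of x C g d j] by auto

lemma EE_rho2_gt: "x \<in> EE C g d j \<Longrightarrow> j < rho2 C x d"
proof -
  assume xj: "x \<in> EE C g d j"
  have xb: "kz < x" "x < g" using EE_bd[OF xj] by auto
  have xd: "x \<le> d" using xb gd by simp
  show ?thesis
  proof (rule ccontr)
    assume "\<not> j < rho2 C x d"
    hence "rho2 C x d \<le> j" by simp
    hence "x < Tr C x d (rho2 C x d)" using EE_Tr_gt[OF xj] by blast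
    thus False using rho2_props(1)[OF cs xb(1) xd] by simp
  qed
qed

lemma EE_mem: "x \<in> EE C g d j \<Longrightarrow> (x \<in> C (Tr C g d j) \<longleftrightarrow> rho2 C x d = Suc j)"
proof -
  assume xj: "x \<in> EE C g d j"
  have xb: "kz < x" "x < g" using EE_bd[OF xj] by auto
  have xd: "x \<le> d" using xb gd by simp
  have e: "Tr C x d j = Tr C g d j" using EE_Tr[OF xj] by simp
  have xl: "x < Tr C x d j" using EE_Tr_gt[OF xj] by simp
  have st: "Tr C x d (Suc j) \<in> C (Tr C x d j) \<and> x \<le> Tr C x d (Suc j)
         \<and> (\<forall>y\<in>C (Tr C x d j). x \<le> y \<longrightarrow> Tr C x d (Suc j) \<le> y)"
    using Tr_step[OF cs xb(1) xl] by blast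
  show ?thesis
  proof
    assume "x \<in> C (Tr C g d j)"
    hence "Tr C x d (Suc j) \<le> x" using st e by auto
    hence T: "Tr C x d (Suc j) = x" using st by (meson order_antisym)
    have "rho2 C x d \<le> Suc j" using rho2_props(3)[OF cs xb(1) xd T] .
    moreover have "j < rho2 C x d" using EE_rho2_gt[OF xj] .
    ultimately show "rho2 C x d = Suc j" by simp
  next
    assume r: "rho2 C x d = Suc j"
    hence "Tr C x d (Suc j) = x" using rho2_props(1)[OF cs xb(1) xd] by simp
    thus "x \<in> C (Tr C g d j)" using st e by simp
  qed
qed

lemma EE_empty: "\<exists>k. EE C g d (Suc k) = {}"
proof (cases "kz < g")
  case True
  obtain k where k: "Tr C g d k = g" using Tr_term[OF cs True gd] by blast
  have "EE C g d (Suc k) = {}"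
  proof (rule ccontr)
    assume "EE C g d (Suc k) \<noteq> {}"
    then obtain x where x: "x \<in> EE C g d (Suc k)" by blast
    hence xb: "kz < x" "x < g" using EE_bd by blast+
    obtain y where "y \<in> C g" "x \<le> y" using cseq_ex[OF cs xb(2) xb(1)] by blast
    moreover have "y < g" using calculation cseq_sub[OF cs] by blast
    ultimately show False using x k by (auto simp: not_less)
  qed
  thus ?thesis by blast
next
  case False
  hence "EE C g d 0 = {}" by (auto dest: order_less_trans)
  thus ?thesis using EE_anti[of 0 "Suc 0" C g d] by blast
qed

end

lemma exists_last: "P (0::nat) \<Longrightarrow> \<not> P n \<Longrightarrow> \<exists>i. P i \<and> \<not> P (Suc i)"
  by (induction n) auto

lemma lessThan_kz[simp]: "{..<kz} = {}" by auto

lemma rho0_kz: "rho0 C kz d = map (\<lambda>n. otp {}) [0..<rho2 C kz d]"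
  unfolding rho0_def by simp

lemma lemD:
  fixes C :: "'k::wellorder \<Rightarrow> 'k set"
  assumes cs: "C_sequence C" and gd: "g \<le> d"
  shows "\<exists>e. (kz < g \<longrightarrow> e < g) \<and> (\<forall>d'. g \<le> d' \<longrightarrow> (\<forall>x<g. rho2 C x d' = rho2 C x d) \<longrightarrow>
            (\<forall>x. x \<le> e \<longrightarrow> x < g \<longrightarrow> rho0 C x d' = rho0 C x d) \<longrightarrow> (\<forall>x<g. rho0 C x d' = rho0 C x d))"
proof -
  obtain k where k: "EE C g d (Suc k) = {}" using EE_empty[OF cs gd] by blast
  have nek: "n \<le> k" if "EE C g d n \<noteq> {}" for n
  proof (rule ccontr)
    assume "\<not> n \<le> k"
    hence "Suc k \<le> n" by simp
    thus False using EE_anti[of "Suc k" n C g d] k that by blast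
  qed
  define Z where "Z = (\<lambda>j. LEAST x. x \<in> EE C g d j) ` {j. j \<le> k \<and> EE C g d j \<noteq> {}}"
  have fZ: "finite Z" unfolding Z_def by simp
  have Zin: "(LEAST x. x \<in> EE C g d j) \<in> EE C g d j" if "EE C g d j \<noteq> {}" for j
    using that by (metis LeastI ex_in_conv)
  define e where "e = (if Z = {} then kz else Max Z)"
  have eg: "kz < g \<longrightarrow> e < g"
  proof
    assume kg: "kz < g"
    show "e < g"
    proof (cases "Z = {}")
      case True thus ?thesis using kg by (simp add: e_def)
    next
      case False
      have "Max Z \<in> Z" using Max_in[OF fZ False] .
      then obtain j where "EE C g d j \<noteq> {}" "Max Z = (LEAST x. x \<in> EE C g d j)" unfolding Z_def by blast
      thus ?thesis using Zin EE_bd False by (simp add: e_def) blast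
    qed
  qed
  have Zle: "(LEAST x. x \<in> EE C g d j) \<le> e" if "EE C g d j \<noteq> {}" for j
  proof -
    have "(LEAST x. x \<in> EE C g d j) \<in> Z" unfolding Z_def using that nek by blast
    thus ?thesis using Max_ge[OF fZ] by (auto simp: e_def)
  qed
  show ?thesis
  proof (rule exI[of _ e], rule conjI[OF eg], intro allI impI)
    fix d' x
    assume gd': "g \<le> d'" and A2: "\<forall>x<g. rho2 C x d' = rho2 C x d"
      and A0: "\<forall>x. x \<le> e \<longrightarrow> x < g \<longrightarrow> rho0 C x d' = rho0 C x d" and xg: "x < g"
    have E6: "EE C g d' j = EE C g d j \<and> (\<forall>y\<in>EE C g d j. y \<in> C (Tr C g d j) \<longleftrightarrow> y \<in> C (Tr C g d' j))" for j
    proof (induction j)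
      case 0
      have "EE C g d' 0 = EE C g d 0" by simp
      moreover have "\<forall>y\<in>EE C g d 0. y \<in> C (Tr C g d 0) \<longleftrightarrow> y \<in> C (Tr C g d' 0)"
        using EE_mem[OF cs gd, of _ 0] EE_mem[OF cs gd', of _ 0] A2 EE_bd by (metis calculation)
      ultimately show ?case by blast
    next
      case (Suc j)
      have eq: "EE C g d' (Suc j) = EE C g d (Suc j)"
      proof -
        have "{y \<in> EE C g d j. \<forall>z\<in>C (Tr C g d' j). z < y \<or> g \<le> z} = {y \<in> EE C g d j. \<forall>z\<in>C (Tr C g d j). z < y \<or> g \<le> z}"
          using Suc.IH EE_up[of _ C g d j] by (auto simp: not_less) (meson not_le)+
        thus ?thesis using Suc.IH by simp
      qed
      moreover have "\<forall>y\<in>EE C g d (Suc j). y \<in> C (Tr C g d (Suc j)) \<longleftrightarrow> y \<in> C (Tr C g d' (Suc j))"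
      proof
        fix y assume y: "y \<in> EE C g d (Suc j)"
        have y': "y \<in> EE C g d' (Suc j)" using y eq by simp
        have "y < g" using EE_bd[OF y] by simp
        thus "y \<in> C (Tr C g d (Suc j)) \<longleftrightarrow> y \<in> C (Tr C g d' (Suc j))"
          using EE_mem[OF cs gd y] EE_mem[OF cs gd' y'] A2 by simp
      qed
      ultimately show ?case by blast
    qed
    show "rho0 C x d' = rho0 C x d"
    proof (cases "kz < x")
      case False
      hence "x = kz" using kz_le[of x] by (simp add: order_le_less)
      thus ?thesis using rho0_kz[of C d'] rho0_kz[of C d] A2 xg by simp
    next
      case kx: True
      have x0: "x \<in> EE C g d 0" using kx xg by simp
      have "\<not> x \<in> EE C g d (Suc k)" using k by simp
      then obtain i where xi: "x \<in> EE C g d i" and xi1: "x \<notin> EE C g d (Suc i)"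
        using exists_last[of "\<lambda>j. x \<in> EE C g d j", OF x0] by blast
      have xi': "x \<in> EE C g d' i" using xi E6 by simp
      obtain y where y: "y \<in> C (Tr C g d i)" "x \<le> y" "y < g" using xi xi1 by (auto simp: not_less)
      define P where "P = (\<lambda>z. z \<in> C (Tr C g d i) \<and> x \<le> z)"
      define P' where "P' = (\<lambda>z. z \<in> C (Tr C g d' i) \<and> x \<le> z)"
      have xl: "x < Tr C x d i" using EE_Tr_gt[OF cs gd xi] by simp
      have xl': "x < Tr C x d' i" using EE_Tr_gt[OF cs gd' xi'] by simp
      have T1: "Tr C x d (Suc i) = Least P" using xl EE_Tr[OF cs gd xi] by (simp add: P_def)
      have T2: "Tr C x d' (Suc i) = Least P'" using xl' EE_Tr[OF cs gd' xi'] by (simp add: P'_def)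
      have Pl: "P (Least P)" using LeastI[of P y] y by (simp add: P_def)
      have lg: "Least P < g" using Least_le[of P y] y by (simp add: P_def)
      have "Least P' = Least P"
      proof (rule Least_equality)
        have "Least P \<in> EE C g d i" using EE_up[OF xi _ lg] Pl by (simp add: P_def)
        thus "P' (Least P)" using E6 Pl by (simp add: P_def P'_def)
      next
        fix z assume "P' z"
        show "Least P \<le> z"
        proof (rule ccontr)
          assume "\<not> Least P \<le> z"
          hence zl: "z < Least P" by simp
          hence "z \<in> EE C g d i" using EE_up[OF xi] \<open>P' z\<close> lg by (simp add: P'_def)
          hence "P z" using E6 \<open>P' z\<close> by (simp add: P_def P'_def)
          thus False using Least_le[of P z] zl by simp
        qed
      qed
      hence TS: "Tr C x d' (Suc i) = Tr C x d (Suc i)" using T1 T2 by simp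
      have late: "Tr C x d' n = Tr C x d n" if "Suc i \<le> n" for n
        using Tr_shift[OF TS, of "n - Suc i"] that by simp
      have r2: "rho2 C x d' = rho2 C x d" using A2 xg by simp
      have entry: "otp (C (Tr C x d' n) \<inter> {..<x}) = otp (C (Tr C x d n) \<inter> {..<x})" for n
      proof (cases "Suc i \<le> n")
        case True thus ?thesis using late by simp
      next
        case False
        hence ni: "n \<le> i" by simp
        have xn: "x \<in> EE C g d n" using EE_anti[OF ni] xi by blast
        have xn': "x \<in> EE C g d' n" using xn E6 by simp
        have t1: "Tr C x d n = Tr C g d n" using EE_Tr[OF cs gd xn] by simp
        have t2: "Tr C x d' n = Tr C g d' n" using EE_Tr[OF cs gd' xn'] by simp
        define z where "z = (LEAST x. x \<in> EE C g d n)"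
        have zn: "z \<in> EE C g d n" using Zin xn unfolding z_def by blast
        have zn': "z \<in> EE C g d' n" using zn E6 by simp
        have zx: "z \<le> x" unfolding z_def using xn by (rule Least_le)
        have ze: "z \<le> e" unfolding z_def using Zle xn by blast
        have zg: "z < g" using EE_bd[OF zn] by simp
        have r0: "rho0 C z d' = rho0 C z d" using A0 ze zg by blast
        have nr: "n < rho2 C z d" "n < rho2 C z d'" using EE_rho2_gt[OF cs gd zn] EE_rho2_gt[OF cs gd' zn'] by auto
        have "rho0 C z d ! n = otp (C (Tr C z d n) \<inter> {..<z})" using nr unfolding rho0_def by simp
        moreover have "rho0 C z d' ! n = otp (C (Tr C z d' n) \<inter> {..<z})" using nr unfolding rho0_def by simp
        moreover have "Tr C z d n = Tr C g d n" using EE_Tr[OF cs gd zn] by simp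
        moreover have "Tr C z d' n = Tr C g d' n" using EE_Tr[OF cs gd' zn'] by simp
        ultimately have oz: "otp (C (Tr C g d n) \<inter> {..<z}) = otp (C (Tr C g d' n) \<inter> {..<z})"
          using r0 by simp
        have Y: "C (Tr C g d n) \<inter> {z..<x} = C (Tr C g d' n) \<inter> {z..<x}"
        proof -
          have "y \<in> EE C g d n" if "y \<in> {z..<x}" for y using EE_up[OF zn] that xg by auto
          thus ?thesis using E6 by auto
        qed
        have U: "C t \<inter> {..<x} = (C t \<inter> {..<z}) \<union> (C t \<inter> {z..<x})" for t using zx by auto
        have "otp (C (Tr C g d n) \<inter> {..<x}) = otp (C (Tr C g d' n) \<inter> {..<x})"
          unfolding U Y by (rule otp_union[OF _ _ _ oz]) auto
        thus ?thesis using t1 t2 by simp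
      qed
      show ?thesis unfolding rho0_def r2 using entry by simp
    qed
  qed
qed



definition ht :: "('k::wellorder \<rightharpoonup> 'v) \<Rightarrow> 'k" where "ht t = (LEAST g. t g = None)"

definition Lv :: "('k::wellorder \<Rightarrow> 'k \<Rightarrow> 'v) \<Rightarrow> 'k \<Rightarrow> ('k \<rightharpoonup> 'v) set" where
  "Lv c a = {fiber_restr c d a | d. a \<le> d}"

lemma fr_None: "fiber_restr c d g x = None \<longleftrightarrow> g \<le> x"
  unfolding fiber_restr_def by (auto simp: not_less)

lemma fr_Some: "x < g \<Longrightarrow> fiber_restr c d g x = Some (c x d)"
  unfolding fiber_restr_def by simp

lemma ht_fr[simp]: "ht (fiber_restr c d g) = g"
  unfolding ht_def by (rule Least_equality) (auto simp: fr_None)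

lemma fr_restr: "fiber_restr c d g |` {..<b} = fiber_restr c d (min b g)"
  unfolding fiber_restr_def restrict_map_def by (auto intro!: ext)

lemma Tc_mem: "t \<in> Tc c \<longleftrightarrow> (\<exists>g d. g \<le> d \<and> t = fiber_restr c d g)"
  unfolding Tc_def by blast

lemma Tc_restr: assumes "t \<in> Tc c" shows "t |` {..<b} \<in> Tc c"
proof -
  obtain g d where gd: "g \<le> d" "t = fiber_restr c d g" using assms unfolding Tc_mem by blast
  have "min b g \<le> d" using gd(1) by (simp add: min.coboundedI2)
  thus ?thesis unfolding gd(2) fr_restr Tc_mem by blast
qed

lemma ht_restr: "t \<in> Tc c \<Longrightarrow> ht (t |` {..<b}) = min b (ht t)"
  unfolding Tc_mem by (auto simp: fr_restr)

lemma fr_eq_iff: "fiber_restr c d g = fiber_restr c d' g' \<longleftrightarrow> g = g' \<and> (\<forall>x<g. c x d = c x d')"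
proof
  assume e: "fiber_restr c d g = fiber_restr c d' g'"
  hence "g = g'" by (metis ht_fr)
  moreover have "\<forall>x<g. c x d = c x d'" using e calculation by (metis fr_Some option.inject)
  ultimately show "g = g' \<and> (\<forall>x<g. c x d = c x d')" by blast
next
  assume "g = g' \<and> (\<forall>x<g. c x d = c x d')"
  thus "fiber_restr c d g = fiber_restr c d' g'" unfolding fiber_restr_def by (auto intro!: ext)
qed

lemma Tc_less_iff:
  assumes "s \<in> Tc c" "t \<in> Tc c"
  shows "Tc_less s t \<longleftrightarrow> ht s < ht t \<and> s = t |` {..<ht s}"
proof -
  obtain g1 d1 where s: "g1 \<le> d1" "s = fiber_restr c d1 g1" using assms(1) unfolding Tc_mem by blast
  obtain g2 d2 where t: "g2 \<le> d2" "t = fiber_restr c d2 g2" using assms(2) unfolding Tc_mem by blast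
  show ?thesis
  proof
    assume l: "Tc_less s t"
    hence le: "s \<subseteq>\<^sub>m t" and ne: "s \<noteq> t" unfolding Tc_less_def by auto
    have agree: "c x d1 = c x d2 \<and> x < g2" if "x < g1" for x
    proof -
      have "s x = Some (c x d1)" using s that by (simp add: fr_Some)
      hence "t x = Some (c x d1)" using le unfolding map_le_def by (metis domI)
      thus ?thesis using t by (metis fr_None fr_Some not_le option.distinct(1) option.inject)
    qed
    have g12: "g1 \<le> g2"
    proof (rule ccontr)
      assume "\<not> g1 \<le> g2" hence "g2 < g1" by simp
      thus False using agree[of g2] by simp
    qed
    have rs: "s = t |` {..<g1}" unfolding s t fr_restr using g12 agree by (simp add: fr_eq_iff min_absorb1)
    have "g1 \<noteq> g2" using ne rs t by (metis fr_restr min.idem)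
    hence "ht s = g1" "ht t = g2" "g1 < g2" using g12 s t by auto
    thus "ht s < ht t \<and> s = t |` {..<ht s}" using rs by simp
  next
    assume h: "ht s < ht t \<and> s = t |` {..<ht s}"
    have "t |` {..<ht s} \<subseteq>\<^sub>m t" by (auto simp: map_le_def restrict_map_def)
    hence "s \<subseteq>\<^sub>m t" using h by simp
    moreover have "s \<noteq> t" using h by auto
    ultimately show "Tc_less s t" unfolding Tc_less_def by blast
  qed
qed

lemma height_is_Tc:
  assumes tT: "t \<in> Tc c"
  shows "height_is (Tc c) Tc_less t a \<longleftrightarrow> a = ht t"
proof -
  obtain g d where gd: "g \<le> d" "t = fiber_restr c d g" using tT unfolding Tc_mem by blast
  define r where "r b = t |` {..<b}" for b
  define P where "P = {y \<in> Tc c. Tc_less y t}"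
  have rT: "r b \<in> Tc c" for b unfolding r_def using Tc_restr[OF tT] .
  have htr: "b < g \<Longrightarrow> ht (r b) = b" for b unfolding r_def gd fr_restr by simp
  have rless: "b1 < g \<Longrightarrow> b2 < g \<Longrightarrow> (b1 < b2 \<longleftrightarrow> Tc_less (r b1) (r b2))" for b1 b2
  proof -
    assume b: "b1 < g" "b2 < g"
    have "r b1 = r b2 |` {..<b1}" if "b1 < b2" unfolding r_def gd fr_restr using b that
      by (simp add: min_absorb1)
    thus ?thesis using Tc_less_iff[OF rT rT, of b1 b2] htr b by auto
  qed
  have Pimg: "P = r ` {..<g}"
  proof
    show "P \<subseteq> r ` {..<g}"
    proof
      fix y assume "y \<in> P"
      hence y: "y \<in> Tc c" "Tc_less y t" unfolding P_def by auto
      hence "ht y < g" "y = r (ht y)" using Tc_less_iff[OF y(1) tT] gd unfolding r_def by auto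
      thus "y \<in> r ` {..<g}" by blast
    qed
  next
    show "r ` {..<g} \<subseteq> P"
    proof
      fix y assume "y \<in> r ` {..<g}"
      then obtain b where b: "b < g" "y = r b" by blast
      have "Tc_less (r b) t" using Tc_less_iff[OF rT tT, of b] htr[OF b(1)] b(1) gd unfolding r_def by simp
      thus "y \<in> P" using b rT unfolding P_def by blast
    qed
  qed
  have htP: "ht ` P = {..<g}" unfolding Pimg image_image using htr by (auto simp: image_iff)
  have Pht: "y \<in> P \<Longrightarrow> ht y < g" using htP by blast
  have Pless: "y1 \<in> P \<Longrightarrow> y2 \<in> P \<Longrightarrow> Tc_less y1 y2 \<Longrightarrow> ht y1 < ht y2" for y1 y2
    using Tc_less_iff unfolding P_def by blast
  show ?thesis
  proof
    assume "height_is (Tc c) Tc_less t a"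
    then obtain f where f: "bij_betw f {..<a} P" "\<forall>x<a. \<forall>y<a. x < y \<longleftrightarrow> Tc_less (f x) (f y)"
      unfolding height_is_def P_def by blast
    have sm: "strict_mono_on {..<a} (ht \<circ> f)"
      by (rule strict_mono_onI) (use f Pless in \<open>auto simp: bij_betw_def\<close>)
    have "(ht \<circ> f) ` {..<a} = {..<g}" using f(1) htP unfolding bij_betw_def image_comp[symmetric] by simp
    hence "bij_betw (ht \<circ> f) {..<a} {..<g}" using strict_mono_on_imp_inj_on[OF sm] unfolding bij_betw_def by blast
    hence "a = g" using iso_seg_eq sm by blast
    thus "a = ht t" using gd by simp
  next
    assume "a = ht t"
    hence a: "a = g" using gd by simp
    have "inj_on r {..<g}" using htr by (metis inj_onI lessThan_iff)
    hence "bij_betw r {..<a} P" using Pimg a unfolding bij_betw_def by blast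
    moreover have "\<forall>x<a. \<forall>y<a. x < y \<longleftrightarrow> Tc_less (r x) (r y)" using rless a by blast
    ultimately show "height_is (Tc c) Tc_less t a" unfolding height_is_def P_def by blast
  qed
qed

lemma level_Tc: "{x \<in> Tc c. height_is (Tc c) Tc_less x a} = Lv c a"
proof -
  have "{x \<in> Tc c. height_is (Tc c) Tc_less x a} = {x \<in> Tc c. ht x = a}" using height_is_Tc[of _ c a] by auto
  also have "\<dots> = Lv c a" unfolding Lv_def Tc_mem by auto
  finally show ?thesis .
qed

lemma kappa_tree_Tc:
  "kappa_tree (TYPE('k::wellorder)) (Tc (c::'k \<Rightarrow> 'k \<Rightarrow> 'v)) Tc_less \<longleftrightarrow> (\<forall>a. sm TYPE('k) (Lv c a))"
proof -
  have irr: "\<forall>x\<in>Tc c. \<not> Tc_less x x" unfolding Tc_less_def by blast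
  have tr: "\<forall>x\<in>Tc c. \<forall>y\<in>Tc c. \<forall>z\<in>Tc c. Tc_less x y \<longrightarrow> Tc_less y z \<longrightarrow> Tc_less x z"
    unfolding Tc_less_def using map_le_antisym map_le_trans by metis
  have hex: "\<forall>x\<in>Tc c. \<exists>a::'k. height_is (Tc c) Tc_less x a" using height_is_Tc by blast
  have ne: "Lv c a \<noteq> {}" for a unfolding Lv_def by blast
  show ?thesis unfolding kappa_tree_def level_Tc sm_def using irr tr hex ne by blast
qed

lemma nonmin_Tc:
  assumes "x \<in> Tc c"
  shows "(\<exists>y\<in>Tc c. Tc_less y x) \<longleftrightarrow> kz < ht x"
proof
  assume "\<exists>y\<in>Tc c. Tc_less y x"
  then obtain y where "y \<in> Tc c" "Tc_less y x" by blast
  hence "ht y < ht x" using Tc_less_iff assms by blast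
  thus "kz < ht x" using kz_le order_le_less_trans by blast
next
  assume k: "kz < ht x"
  have "x |` {..<kz} \<in> Tc c" using Tc_restr[OF assms] .
  moreover have "Tc_less (x |` {..<kz}) x"
    using Tc_less_iff[OF calculation assms] ht_restr[OF assms, of kz] k by simp
  ultimately show "\<exists>y\<in>Tc c. Tc_less y x" by blast
qed



definition pm :: "('k \<rightharpoonup> 'a list) \<Rightarrow> ('k \<rightharpoonup> nat)" where
  "pm t = (\<lambda>x. map_option length (t x))"

lemma pm_fr: "pm (fiber_restr (rho0 C) d g) = fiber_restr (rho2 C) d g"
  unfolding pm_def fiber_restr_def rho0_def by (auto intro!: ext)

lemma pm_restr: "pm (t |` A) = pm t |` A"
  unfolding pm_def restrict_map_def by (auto intro!: ext)

lemma pm_T: "t \<in> Tc (rho0 C) \<Longrightarrow> pm t \<in> Tc (rho2 C)"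
  unfolding Tc_mem using pm_fr by metis

lemma pm_ht: "t \<in> Tc (rho0 C) \<Longrightarrow> ht (pm t) = ht t"
  unfolding Tc_mem by (auto simp: pm_fr)

lemma pm_less: assumes "x \<in> Tc (rho0 C)" "y \<in> Tc (rho0 C)" "Tc_less x y"
  shows "Tc_less (pm x) (pm y)"
proof -
  have "ht x < ht y" "x = y |` {..<ht x}" using Tc_less_iff assms by blast+
  hence "ht (pm x) < ht (pm y)" "pm x = pm y |` {..<ht (pm x)}"
    using pm_ht assms(1,2) pm_restr by metis+
  thus ?thesis using Tc_less_iff pm_T assms(1,2) by blast
qed

lemma pm_Lv: "Lv (rho2 C) a = pm ` Lv (rho0 C) a"
proof -
  have "{fiber_restr (rho2 C) d a |d. a \<le> d} = pm ` {fiber_restr (rho0 C) d a |d. a \<le> d}"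
  proof
    show "{fiber_restr (rho2 C) d a |d. a \<le> d} \<subseteq> pm ` {fiber_restr (rho0 C) d a |d. a \<le> d}"
    proof
      fix y assume "y \<in> {fiber_restr (rho2 C) d a |d. a \<le> d}"
      then obtain d where "a \<le> d" "y = fiber_restr (rho2 C) d a" by blast
      thus "y \<in> pm ` {fiber_restr (rho0 C) d a |d. a \<le> d}"
        using pm_fr[of C d a, symmetric] by blast
    qed
  next
    show "pm ` {fiber_restr (rho0 C) d a |d. a \<le> d} \<subseteq> {fiber_restr (rho2 C) d a |d. a \<le> d}"
      using pm_fr by fastforce
  qed
  thus ?thesis unfolding Lv_def .
qed

lemma Tc_Lv: "t \<in> Tc c \<Longrightarrow> t \<in> Lv c (ht t)"
  unfolding Tc_mem Lv_def by auto

lemma fr_kz: "fiber_restr c d kz = Map.empty"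
  unfolding fiber_restr_def by auto

lemma Tc_kz: "t \<in> Tc c \<Longrightarrow> ht t = kz \<Longrightarrow> t = Map.empty"
  unfolding Tc_mem using fr_kz by fastforce

lemma empty_Tc: "Map.empty \<in> Tc c"
  unfolding Tc_mem using fr_kz[of c kz, symmetric] by blast

lemma rho0_set: "set (rho0 C e d) \<subseteq> {..e}"
  unfolding rho0_def using otp_ex[of "C _ \<inter> {..<e}" e] by auto

lemma lemD':
  fixes C :: "'k::wellorder \<Rightarrow> 'k set"
  assumes cs: "C_sequence C" and gd: "g \<le> d" and kg: "kz < g"
  shows "\<exists>e. e < g \<and> (\<forall>d'. g \<le> d' \<longrightarrow> (\<forall>x<g. rho2 C x d' = rho2 C x d) \<longrightarrow>
            (\<forall>x. x \<le> e \<longrightarrow> x < g \<longrightarrow> rho0 C x d' = rho0 C x d) \<longrightarrow> (\<forall>x<g. rho0 C x d' = rho0 C x d))"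
  using lemD[OF cs gd] kg by blast

lemma kt20:
  fixes C :: "'k::wellorder \<Rightarrow> 'k set"
  assumes R: "regular_uncountable_cardinal TYPE('k)" and cs: "C_sequence C"
    and h2: "\<forall>a. sm TYPE('k) (Lv (rho2 C) a)"
  shows "sm TYPE('k) (Lv (rho0 C) a)"
proof (induction a rule: less_induct)
  case (less a)
  show ?case
  proof (cases "kz < a")
    case False
    hence "a = kz" using kz_le[of a] by (simp add: order_le_less)
    hence "Lv (rho0 C) a \<subseteq> {Map.empty}" unfolding Lv_def using fr_kz by auto
    thus ?thesis using sm_mono sm_finite[OF R, of "{Map.empty}"] by blast
  next
    case ka: True
    have "\<forall>x\<in>Lv (rho0 C) a. \<exists>d. a \<le> d \<and> x = fiber_restr (rho0 C) d a" unfolding Lv_def by blast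
    then obtain dd where dd: "\<And>x. x \<in> Lv (rho0 C) a \<Longrightarrow> a \<le> dd x \<and> x = fiber_restr (rho0 C) (dd x) a"
      by metis
    define Q where "Q x e \<longleftrightarrow> e < a \<and> (\<forall>d'. a \<le> d' \<longrightarrow> (\<forall>y<a. rho2 C y d' = rho2 C y (dd x)) \<longrightarrow>
            (\<forall>y. y \<le> e \<longrightarrow> y < a \<longrightarrow> rho0 C y d' = rho0 C y (dd x)) \<longrightarrow> (\<forall>y<a. rho0 C y d' = rho0 C y (dd x)))" for x e
    have "\<forall>x\<in>Lv (rho0 C) a. \<exists>e. Q x e"
      unfolding Q_def using lemD'[OF cs _ ka] dd by blast
    hence "\<exists>ee. \<forall>x\<in>Lv (rho0 C) a. Q x (ee x)" by (rule bchoice)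
    then obtain ee where ee0: "\<forall>x\<in>Lv (rho0 C) a. Q x (ee x)" by blast
    have ee: "ee x < a \<and> (\<forall>d'. a \<le> d' \<longrightarrow> (\<forall>y<a. rho2 C y d' = rho2 C y (dd x)) \<longrightarrow>
            (\<forall>y. y \<le> ee x \<longrightarrow> y < a \<longrightarrow> rho0 C y d' = rho0 C y (dd x)) \<longrightarrow> (\<forall>y<a. rho0 C y d' = rho0 C y (dd x)))"
      if "x \<in> Lv (rho0 C) a" for x using ee0 that unfolding Q_def by blast
    define Phi where "Phi x = (pm x, x |` {..<ee x}, rho0 C (ee x) (dd x))" for x
    have inj: "inj_on Phi (Lv (rho0 C) a)"
    proof (rule inj_onI)
      fix x y assume x: "x \<in> Lv (rho0 C) a" and y: "y \<in> Lv (rho0 C) a" and e: "Phi x = Phi y"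
      have xr: "x = fiber_restr (rho0 C) (dd x) a" and yr: "y = fiber_restr (rho0 C) (dd y) a"
        using dd x y by auto
      have "pm x = pm y" using e unfolding Phi_def by simp
      hence "fiber_restr (rho2 C) (dd x) a = fiber_restr (rho2 C) (dd y) a"
        using xr yr pm_fr by metis
      hence A2: "\<forall>z<a. rho2 C z (dd y) = rho2 C z (dd x)" using fr_eq_iff by metis
      have "x |` {..<ee x} = y |` {..<ee y}" using e unfolding Phi_def by simp
      hence "fiber_restr (rho0 C) (dd x) (ee x) = fiber_restr (rho0 C) (dd y) (ee y)"
        using xr yr fr_restr ee[OF x] ee[OF y] by (metis min.strict_order_iff)
      hence eq: "ee x = ee y" and lo: "\<forall>z<ee x. rho0 C z (dd x) = rho0 C z (dd y)" using fr_eq_iff by metis+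
      have "rho0 C (ee x) (dd x) = rho0 C (ee y) (dd y)" using e unfolding Phi_def by simp
      hence A0: "\<forall>z. z \<le> ee x \<longrightarrow> z < a \<longrightarrow> rho0 C z (dd y) = rho0 C z (dd x)"
        using lo eq by (metis order_le_less)
      have "a \<le> dd y" using dd y by blast
      hence "\<forall>z<a. rho0 C z (dd y) = rho0 C z (dd x)" using ee[OF x] A2 A0 by blast
      thus "x = y" using xr yr fr_eq_iff by metis
    qed
    have sub: "Phi ` Lv (rho0 C) a \<subseteq> Lv (rho2 C) a \<times> (\<Union>b\<in>{..<a}. Lv (rho0 C) b) \<times> lists {..<a}"
    proof
      fix p assume "p \<in> Phi ` Lv (rho0 C) a"
      then obtain x where x: "x \<in> Lv (rho0 C) a" and p: "p = Phi x" by blast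
      have xr: "x = fiber_restr (rho0 C) (dd x) a" "a \<le> dd x" using dd x by auto
      have ea: "ee x < a" using ee x by blast
      have "pm x \<in> Lv (rho2 C) a" using x pm_Lv by blast
      moreover have "x |` {..<ee x} \<in> Lv (rho0 C) (ee x)"
      proof -
        have "x |` {..<ee x} = fiber_restr (rho0 C) (dd x) (ee x)"
          using xr ea by (metis fr_restr min.strict_order_iff)
        moreover have "ee x \<le> dd x" using xr ea by simp
        ultimately show ?thesis unfolding Lv_def by blast
      qed
      moreover have "rho0 C (ee x) (dd x) \<in> lists {..<a}" using rho0_set ea by fastforce
      ultimately show "p \<in> Lv (rho2 C) a \<times> (\<Union>b\<in>{..<a}. Lv (rho0 C) b) \<times> lists {..<a}"
        using p ea unfolding Phi_def by blast
    qed
    have "sm TYPE('k) (Lv (rho2 C) a \<times> (\<Union>b\<in>{..<a}. Lv (rho0 C) b) \<times> lists {..<a})"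
      by (intro sm_Times[OF R] h2[rule_format] sm_UN[OF R] reg_seg[OF R] sm_lists[OF R] less.IH) auto
    thus ?thesis using sm_inj[OF _ inj sub] by blast
  qed
qed



lemma spec20:
  fixes C :: "'k::wellorder \<Rightarrow> 'k set"
  assumes R: "regular_uncountable_cardinal TYPE('k)"
    and kt0: "kappa_tree TYPE('k) (Tc (rho0 C)) Tc_less"
    and sp2: "special_kappa_tree TYPE('k) (Tc (rho2 C)) Tc_less"
  shows "special_kappa_tree TYPE('k) (Tc (rho0 C)) Tc_less"
proof -
  let ?T0 = "Tc (rho0 C)" and ?T2 = "Tc (rho2 C)"
  obtain f2 where f2T: "\<forall>x\<in>?T2. f2 x \<in> ?T2"
    and f2l: "\<forall>x\<in>?T2. (\<exists>y\<in>?T2. Tc_less y x) \<longrightarrow> Tc_less (f2 x) x"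
    and f2A: "\<forall>z\<in>?T2. \<exists>\<A>. |\<A>| <o |UNIV::'k set| \<and> (\<forall>A\<in>\<A>. antichain_in ?T2 Tc_less A) \<and> {x\<in>?T2. f2 x = z} \<subseteq> \<Union>\<A>"
    using sp2 unfolding special_kappa_tree_def by blast
  define f where "f x = x |` {..<ht (f2 (pm x))}" for x :: "'k \<rightharpoonup> 'k list"
  have fT: "\<forall>x\<in>?T0. f x \<in> ?T0" unfolding f_def using Tc_restr by blast
  have fless: "Tc_less (f x) x \<and> f2 (pm x) = pm (f x)" if xT: "x \<in> ?T0" and k: "kz < ht x" for x
  proof -
    have pT: "pm x \<in> ?T2" using pm_T xT by blast
    have "kz < ht (pm x)" using pm_ht[OF xT] k by simp
    hence "Tc_less (f2 (pm x)) (pm x)" using f2l pT nonmin_Tc[OF pT] by blast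
    hence h: "ht (f2 (pm x)) < ht (pm x)" "f2 (pm x) = pm x |` {..<ht (f2 (pm x))}"
      using Tc_less_iff[OF _ pT] f2T pT by blast+
    have hf: "ht (f x) = ht (f2 (pm x))" unfolding f_def using ht_restr[OF xT] h pm_ht[OF xT] by simp
    have "Tc_less (f x) x" using Tc_less_iff[OF fT[rule_format, OF xT] xT] hf h pm_ht[OF xT]
      unfolding f_def by simp
    moreover have "f2 (pm x) = pm (f x)" using h(2) unfolding f_def pm_restr by simp
    ultimately show ?thesis by blast
  qed
  show ?thesis unfolding special_kappa_tree_def
  proof (intro conjI exI[of _ f] ballI impI)
    show "kappa_tree TYPE('k) ?T0 Tc_less" by (rule kt0)
  next
    fix x assume "x \<in> ?T0" thus "f x \<in> ?T0" using fT by blast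
  next
    fix x assume "x \<in> ?T0" "\<exists>y\<in>?T0. Tc_less y x"
    thus "Tc_less (f x) x" using fless nonmin_Tc by blast
  next
    fix z assume zT: "z \<in> ?T0"
    from f2A[rule_format, OF pm_T[OF zT]]
    obtain A2 where A2s: "|A2| <o |UNIV::'k set|" and A2a: "\<forall>A\<in>A2. antichain_in ?T2 Tc_less A"
      and A2c: "{x\<in>?T2. f2 x = pm z} \<subseteq> \<Union>A2" by (elim exE conjE)
    define AA where "AA = insert {Map.empty} ((\<lambda>A. ?T0 \<inter> pm -` A) ` A2)"
    have "sm TYPE('k) A2" using A2s unfolding sm_def .
    hence "sm TYPE('k) AA" unfolding AA_def by (rule sm_insert[OF R sm_image])
    moreover have "\<forall>A\<in>AA. antichain_in ?T0 Tc_less A"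
    proof
      fix A assume "A \<in> AA"
      then consider "A = {Map.empty}" | B where "B \<in> A2" "A = ?T0 \<inter> pm -` B" unfolding AA_def by blast
      thus "antichain_in ?T0 Tc_less A"
      proof cases
        case 1 thus ?thesis unfolding antichain_in_def Tc_less_def using empty_Tc by blast
      next
        case 2
        thus ?thesis using A2a pm_less unfolding antichain_in_def by blast
      qed
    qed
    moreover have "{x\<in>?T0. f x = z} \<subseteq> \<Union>AA"
    proof
      fix x assume "x \<in> {x\<in>?T0. f x = z}"
      hence xT: "x \<in> ?T0" and fx: "f x = z" by auto
      show "x \<in> \<Union>AA"
      proof (cases "kz < ht x")
        case False
        hence "ht x = kz" using kz_le[of "ht x"] by (simp add: order_le_less)
        hence "x = Map.empty" using Tc_kz xT by blast
        thus ?thesis unfolding AA_def by blast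
      next
        case True
        hence "f2 (pm x) = pm z" using fless xT fx by blast
        hence "pm x \<in> \<Union>A2" using A2c pm_T[OF xT] by blast
        then obtain B where "B \<in> A2" "pm x \<in> B" by blast
        thus ?thesis unfolding AA_def using xT by blast
      qed
    qed
    ultimately show "\<exists>\<A>. |\<A>| <o |UNIV::'k set| \<and> (\<forall>A\<in>\<A>. antichain_in ?T0 Tc_less A) \<and> {x\<in>?T0. f x = z} \<subseteq> \<Union>\<A>"
      unfolding sm_def by blast
  qed
qed



lemma spec02:
  fixes C :: "'k::wellorder \<Rightarrow> 'k set"
  assumes R: "regular_uncountable_cardinal TYPE('k)" and cs: "C_sequence C"
    and sp0: "special_kappa_tree TYPE('k) (Tc (rho0 C)) Tc_less"
  shows "special_kappa_tree TYPE('k) (Tc (rho2 C)) Tc_less"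
proof -
  let ?T0 = "Tc (rho0 C)" and ?T2 = "Tc (rho2 C)"
  have kt0: "kappa_tree TYPE('k) ?T0 Tc_less" using sp0 unfolding special_kappa_tree_def by blast
  have L0: "sm TYPE('k) (Lv (rho0 C) a)" for a using kt0 kappa_tree_Tc by blast
  have kt2: "kappa_tree TYPE('k) ?T2 Tc_less"
    unfolding kappa_tree_Tc pm_Lv using L0 sm_image by blast
  obtain f0 where f0T: "\<forall>x\<in>?T0. f0 x \<in> ?T0"
    and f0l: "\<forall>x\<in>?T0. (\<exists>y\<in>?T0. Tc_less y x) \<longrightarrow> Tc_less (f0 x) x"
    and f0A: "\<forall>z\<in>?T0. \<exists>\<A>. |\<A>| <o |UNIV::'k set| \<and> (\<forall>A\<in>\<A>. antichain_in ?T0 Tc_less A) \<and> {x\<in>?T0. f0 x = z} \<subseteq> \<Union>\<A>"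
    using sp0 unfolding special_kappa_tree_def by blast
  define Q where "Q z B \<longleftrightarrow> sm TYPE('k) B \<and> (\<forall>A\<in>B. antichain_in ?T0 Tc_less A) \<and> {x\<in>?T0. f0 x = z} \<subseteq> \<Union>B" for z B
  have "\<forall>z\<in>?T0. \<exists>B. Q z B" unfolding Q_def sm_def using f0A .
  hence "\<exists>AA. \<forall>z\<in>?T0. Q z (AA z)" by (rule bchoice)
  then obtain AA where AA0: "\<forall>z\<in>?T0. Q z (AA z)" by blast
  have AAs: "sm TYPE('k) (AA z)" and AAa: "\<forall>A\<in>AA z. antichain_in ?T0 Tc_less A"
    and AAc: "{x\<in>?T0. f0 x = z} \<subseteq> \<Union>(AA z)" if "z \<in> ?T0" for z
    using AA0 that unfolding Q_def by blast+
  define dd where "dd s = (SOME d. ht s \<le> d \<and> s = fiber_restr (rho2 C) d (ht s))" for s :: "'k \<rightharpoonup> nat"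
  have dd: "ht s \<le> dd s \<and> s = fiber_restr (rho2 C) (dd s) (ht s)" if "s \<in> ?T2" for s
  proof -
    from that[unfolded Tc_mem] obtain g d where gd: "g \<le> d" "s = fiber_restr (rho2 C) d g" by (elim exE conjE)
    hence "ht s \<le> d \<and> s = fiber_restr (rho2 C) d (ht s)" by simp
    hence "\<exists>d. ht s \<le> d \<and> s = fiber_restr (rho2 C) d (ht s)" by (rule exI)
    thus ?thesis unfolding dd_def by (rule someI_ex)
  qed
  define xs where "xs s = fiber_restr (rho0 C) (dd s) (ht s)" for s
  have xsT: "xs s \<in> ?T0" if "s \<in> ?T2" for s unfolding xs_def Tc_mem using dd[OF that] by blast
  have xsh: "ht (xs s) = ht s" for s unfolding xs_def by simp
  have pxs: "pm (xs s) = s" if "s \<in> ?T2" for s unfolding xs_def pm_fr using dd[OF that] by simp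
  define Qe where "Qe s e \<longleftrightarrow> e < ht s \<and> (\<forall>d'. ht s \<le> d' \<longrightarrow> (\<forall>y<ht s. rho2 C y d' = rho2 C y (dd s)) \<longrightarrow>
            (\<forall>y. y \<le> e \<longrightarrow> y < ht s \<longrightarrow> rho0 C y d' = rho0 C y (dd s)) \<longrightarrow> (\<forall>y<ht s. rho0 C y d' = rho0 C y (dd s)))" for s e
  define ee where "ee s = (SOME e. Qe s e)" for s
  have ee: "Qe s (ee s)" if "s \<in> ?T2" "kz < ht s" for s
  proof -
    have "\<exists>e. Qe s e" unfolding Qe_def using lemD'[OF cs _ that(2)] dd[OF that(1)] by blast
    thus ?thesis unfolding ee_def by (rule someI_ex)
  qed
  define zz where "zz s = f0 (xs s)" for s
  have zzT: "zz s \<in> ?T0" if "s \<in> ?T2" for s unfolding zz_def using f0T xsT[OF that] by blast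
  define AS where "AS s = (SOME A. A \<in> AA (zz s) \<and> xs s \<in> A)" for s
  have AS: "AS s \<in> AA (zz s) \<and> xs s \<in> AS s" if "s \<in> ?T2" for s
  proof -
    have "xs s \<in> \<Union>(AA (zz s))" using AAc[OF zzT[OF that]] xsT[OF that] unfolding zz_def by blast
    hence "\<exists>A. A \<in> AA (zz s) \<and> xs s \<in> A" by blast
    thus ?thesis unfolding AS_def by (rule someI_ex)
  qed
  define gg where "gg s = s |` {..<max (ht (zz s)) (ee s)}" for s
  have ggT: "gg s \<in> ?T2" if "s \<in> ?T2" for s unfolding gg_def using Tc_restr that by blast
  have gmax: "max (ht (zz s)) (ee s) < ht s" if sT: "s \<in> ?T2" and k: "kz < ht s" for s
  proof -
    have "kz < ht (xs s)" using k xsh by simp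
    hence "Tc_less (zz s) (xs s)" unfolding zz_def using f0l xsT[OF sT] nonmin_Tc[OF xsT[OF sT]] by blast
    hence "ht (zz s) < ht s" using Tc_less_iff[OF zzT[OF sT] xsT[OF sT]] xsh by simp
    moreover have "ee s < ht s" using ee[OF sT k] unfolding Qe_def by blast
    ultimately show ?thesis by simp
  qed
  have ggl: "Tc_less (gg s) s" if sT: "s \<in> ?T2" and k: "kz < ht s" for s
  proof -
    have "ht (gg s) = max (ht (zz s)) (ee s)" unfolding gg_def using ht_restr[OF sT] gmax[OF sT k] by simp
    thus ?thesis using Tc_less_iff[OF ggT[OF sT] sT] gmax[OF sT k] unfolding gg_def by simp
  qed
  define key where "key s = (zz s, AS s, xs s |` {..<ee s}, rho0 C (ee s) (dd s))" for s
  define cls where "cls w k = {s \<in> ?T2. kz < ht s \<and> gg s = w \<and> key s = k}" for w k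
  have cls_anti: "antichain_in ?T2 Tc_less (cls w k)" for w k
    unfolding antichain_in_def
  proof (intro conjI ballI)
    show "cls w k \<subseteq> ?T2" unfolding cls_def by blast
  next
    fix s s' assume s: "s \<in> cls w k" and s': "s' \<in> cls w k"
    show "\<not> Tc_less s s'"
    proof
      assume l: "Tc_less s s'"
      have sT: "s \<in> ?T2" and ks: "kz < ht s" and sT': "s' \<in> ?T2" and ks': "kz < ht s'"
        and kk: "key s = key s'" using s s' unfolding cls_def by auto
      have hl: "ht s < ht s'" and sr: "s = s' |` {..<ht s}" using Tc_less_iff[OF sT sT'] l by auto
      have Qs: "Qe s (ee s)" using ee[OF sT ks] .
      have Qs': "Qe s' (ee s')" using ee[OF sT' ks'] .
      have es: "ee s < ht s" using Qs unfolding Qe_def by blast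
      have es': "ee s' < ht s'" using Qs' unfolding Qe_def by blast
      have "xs s |` {..<ee s} = xs s' |` {..<ee s'}" using kk unfolding key_def by simp
      hence "fiber_restr (rho0 C) (dd s) (ee s) = fiber_restr (rho0 C) (dd s') (ee s')"
        unfolding xs_def fr_restr using es es' by (simp add: min_absorb1)
      hence eq: "ee s = ee s'" and lo: "\<forall>y<ee s. rho0 C y (dd s) = rho0 C y (dd s')"
        using fr_eq_iff by metis+
      have "rho0 C (ee s) (dd s) = rho0 C (ee s') (dd s')" using kk unfolding key_def by simp
      hence A0: "\<forall>y. y \<le> ee s \<longrightarrow> y < ht s \<longrightarrow> rho0 C y (dd s') = rho0 C y (dd s)"
        using lo eq by (metis order_le_less)
      have "fiber_restr (rho2 C) (dd s) (ht s) = fiber_restr (rho2 C) (dd s') (ht s)"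
        using sr dd[OF sT] dd[OF sT'] hl by (metis fr_restr min.strict_order_iff)
      hence A2: "\<forall>y<ht s. rho2 C y (dd s') = rho2 C y (dd s)" using fr_eq_iff by metis
      have "ht s \<le> dd s'" using dd[OF sT'] hl by (meson order.strict_implies_order order_trans)
      hence R0: "\<forall>y<ht s. rho0 C y (dd s') = rho0 C y (dd s)" using Qs A2 A0 unfolding Qe_def by blast
      have e1: "xs s = xs s' |` {..<ht s}"
        unfolding xs_def fr_restr using R0 hl by (simp add: min_absorb1 fr_eq_iff)
      have "ht (xs s) < ht (xs s') \<and> xs s = xs s' |` {..<ht (xs s)}" unfolding xsh using hl e1 by blast
      hence xl: "Tc_less (xs s) (xs s')" using Tc_less_iff[OF xsT[OF sT] xsT[OF sT']] by blast
      have "AS s = AS s'" using kk unfolding key_def by simp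
      hence "xs s \<in> AS s" "xs s' \<in> AS s" using AS[OF sT] AS[OF sT'] by auto
      moreover have "antichain_in ?T0 Tc_less (AS s)" using AAa[OF zzT[OF sT]] AS[OF sT] by blast
      ultimately show False using xl unfolding antichain_in_def by blast
    qed
  qed
  show ?thesis unfolding special_kappa_tree_def
  proof (intro conjI exI[of _ gg] ballI impI)
    show "kappa_tree TYPE('k) ?T2 Tc_less" by (rule kt2)
  next
    fix s assume "s \<in> ?T2" thus "gg s \<in> ?T2" by (rule ggT)
  next
    fix s assume "s \<in> ?T2" "\<exists>y\<in>?T2. Tc_less y s"
    thus "Tc_less (gg s) s" using ggl nonmin_Tc by blast
  next
    fix w assume wT: "w \<in> ?T2"
    define U where "U = (\<Union>b\<in>{..ht w}. Lv (rho0 C) b)"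
    have Us: "sm TYPE('k) U" unfolding U_def by (rule sm_UN[OF R sm_atMost[OF R] L0])
    have UT: "U \<subseteq> ?T0" unfolding U_def Lv_def Tc_def by blast
    define Keys where "Keys = U \<times> (\<Union>z\<in>U. AA z) \<times> U \<times> lists {..ht w}"
    have Ks: "sm TYPE('k) Keys" unfolding Keys_def
      by (intro sm_Times[OF R] Us sm_UN[OF R] sm_lists[OF R] sm_atMost[OF R] AAs) (use UT in blast)
    define BB where "BB = insert {Map.empty} (cls w ` Keys)"
    have "sm TYPE('k) BB" unfolding BB_def by (rule sm_insert[OF R sm_image[OF Ks]])
    moreover have "\<forall>A\<in>BB. antichain_in ?T2 Tc_less A"
      unfolding BB_def antichain_in_def using cls_anti empty_Tc unfolding antichain_in_def Tc_less_def by blast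
    moreover have "{s\<in>?T2. gg s = w} \<subseteq> \<Union>BB"
    proof
      fix s assume "s \<in> {s\<in>?T2. gg s = w}"
      hence sT: "s \<in> ?T2" and gw: "gg s = w" by auto
      show "s \<in> \<Union>BB"
      proof (cases "kz < ht s")
        case False
        hence "ht s = kz" using kz_le[of "ht s"] by (simp add: order_le_less)
        hence "s = Map.empty" using Tc_kz sT by blast
        thus ?thesis unfolding BB_def by blast
      next
        case ks: True
        have hw: "ht w = max (ht (zz s)) (ee s)"
          using gw ht_restr[OF sT] gmax[OF sT ks] unfolding gg_def by auto
        have z1: "zz s \<in> U" unfolding U_def using Tc_Lv[OF zzT[OF sT]] hw by auto
        have z2: "AS s \<in> (\<Union>z\<in>U. AA z)" using AS[OF sT] z1 by blast
        have es: "ee s < ht s" using gmax[OF sT ks] by simp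
        have "xs s |` {..<ee s} \<in> Tc (rho0 C)" using Tc_restr[OF xsT[OF sT]] .
        moreover have "ht (xs s |` {..<ee s}) = ee s" using ht_restr[OF xsT[OF sT]] xsh es by simp
        ultimately have z3: "xs s |` {..<ee s} \<in> U" unfolding U_def using Tc_Lv hw by fastforce
        have "{..ee s} \<subseteq> {..ht w}" using hw by auto
        hence "set (rho0 C (ee s) (dd s)) \<subseteq> {..ht w}" by (rule subset_trans[OF rho0_set])
        hence z4: "rho0 C (ee s) (dd s) \<in> lists {..ht w}" by (simp add: lists_eq_set)
        have "key s \<in> Keys" unfolding key_def Keys_def using z1 z2 z3 z4 by blast
        moreover have "s \<in> cls w (key s)" unfolding cls_def using sT ks gw by blast
        ultimately show ?thesis unfolding BB_def by blast
      qed
    qed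
    ultimately show "\<exists>\<A>. |\<A>| <o |UNIV::'k set| \<and> (\<forall>A\<in>\<A>. antichain_in ?T2 Tc_less A) \<and> {x\<in>?T2. gg x = w} \<subseteq> \<Union>\<A>"
      unfolding sm_def by blast
  qed
qed


theorem lemma5p3:
  fixes C :: "'k::wellorder \<Rightarrow> 'k set"
  assumes "regular_uncountable_cardinal TYPE('k)"
      and "C_sequence C"
  shows "special_kappa_tree TYPE('k) (Tc (rho0 C)) Tc_less
     \<longleftrightarrow> special_kappa_tree TYPE('k) (Tc (rho2 C)) Tc_less"
proof
  assume "special_kappa_tree TYPE('k) (Tc (rho0 C)) Tc_less"
  thus "special_kappa_tree TYPE('k) (Tc (rho2 C)) Tc_less" by (rule spec02[OF assms(1,2)])
next
  assume sp2: "special_kappa_tree TYPE('k) (Tc (rho2 C)) Tc_less"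
  hence "kappa_tree TYPE('k) (Tc (rho2 C)) Tc_less" unfolding special_kappa_tree_def by blast
  hence "\<forall>a. sm TYPE('k) (Lv (rho2 C) a)" using kappa_tree_Tc by blast
  hence "\<forall>a. sm TYPE('k) (Lv (rho0 C) a)" using kt20[OF assms(1,2)] by blast
  hence "kappa_tree TYPE('k) (Tc (rho0 C)) Tc_less" using kappa_tree_Tc by blast
  thus "special_kappa_tree TYPE('k) (Tc (rho0 C)) Tc_less" by (rule spec20[OF assms(1) _ sp2])
qed

end
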